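(* Let $(A^1,B^1)$ be an $n_1\times m_1$ bimatrix game, $(A^2,B^2)$ an $n_2\times m_2$ bimatrix game, $K$ a real number with $K>|c|$ for every entry $c$ of $A^1,B^1,A^2,B^2$, and let $(A,B)$ be the sum game $(A^1,B^1)+(A^2,B^2)$ via $K$. If $(x,y)$ is a Nash equilibrium of $(A,B)$, then $(x^1,y^1)$ defined by $x^1_i=x_i/\sum_{l=1}^{n_1}x_l$ for $1\le i\le n_1$ and $y^1_j=y_j/\sum_{l=1}^{m_1}y_l$ for $1\le j\le m_1$ is well-defined and is a Nash equilibrium of $(A^1,B^1)$.
   Context: An $n\times m$ bimatrix game $(A,B)$ consists of two real $n\times m$ matrices. A mixed strategy of the row player is a probability vector $x\in\Delta_n=\{x\in\mathbb{R}^n_{\ge 0}:\sum_i x_i=1\}$, of the column player $y\in\Delta_m$; the expected payoffs are $x^TAy$ (row player) and $x^TBy$ (column player). $(x,y)$ is a Nash equilibrium if $x^TAy\ge \hat x^TAy$ for all $\hat x\in\Delta_n$ and $x^TBy\ge x^TB\hat y$ for all $\hat y\in\Delta_m$. The sum game $(A^1,B^1)+(A^2,B^2)$ via $K$ is the $(n_1+n_2)\times(m_1+m_2)$ game $(A,B)$ with $A_{ij}=A^1_{ij}$, $B_{ij}=B^1_{ij}$ if $i\le n_1,j\le m_1$; $A_{ij}=A^2_{i-n_1,j-m_1}$, $B_{ij}=B^2_{i-n_1,j-m_1}$ if $i>n_1,j>m_1$; and $A_{ij}=K$, $B_{ij}=-K$ otherwise. *)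

theory Defs
  imports Main "HOL.Real"
begin

text \<open>Matrices are functions nat => nat => real, vectors nat => real, with explicit
  dimensions; indices are 0-based (row i < n, column j < m). Only entries
  within the dimensions are ever inspected.\<close>

definition simplex :: "nat \<Rightarrow> (nat \<Rightarrow> real) set" where
  "simplex n = {x. (\<forall>i<n. 0 \<le> x i) \<and> (\<Sum>i<n. x i) = 1}"

definition payoff :: "nat \<Rightarrow> nat \<Rightarrow> (nat \<Rightarrow> nat \<Rightarrow> real) \<Rightarrow> (nat \<Rightarrow> real) \<Rightarrow> (nat \<Rightarrow> real) \<Rightarrow> real" where
  "payoff n m M x y = (\<Sum>i<n. \<Sum>j<m. x i * M i j * y j)"

definition nash_eq :: "nat \<Rightarrow> nat \<Rightarrow> (nat \<Rightarrow> nat \<Rightarrow> real) \<Rightarrow> (nat \<Rightarrow> nat \<Rightarrow> real)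
    \<Rightarrow> (nat \<Rightarrow> real) \<Rightarrow> (nat \<Rightarrow> real) \<Rightarrow> bool" where
  "nash_eq n m A B x y \<longleftrightarrow> x \<in> simplex n \<and> y \<in> simplex m \<and>
     (\<forall>x'\<in>simplex n. payoff n m A x' y \<le> payoff n m A x y) \<and>
     (\<forall>y'\<in>simplex m. payoff n m B x y' \<le> payoff n m B x y)"

definition sum_mat :: "nat \<Rightarrow> nat \<Rightarrow> (nat \<Rightarrow> nat \<Rightarrow> real) \<Rightarrow> (nat \<Rightarrow> nat \<Rightarrow> real) \<Rightarrow> real
    \<Rightarrow> nat \<Rightarrow> nat \<Rightarrow> real" where
  "sum_mat n1 m1 M1 M2 c i j =
     (if i < n1 \<and> j < m1 then M1 i j
      else if n1 \<le> i \<and> m1 \<le> j then M2 (i - n1) (j - m1)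
      else c)"

end

theory Submission
  imports Defs
begin

lemma split_sum: "sum f {..<(a::nat)+b} = sum f {..<a} + sum f {a..<a+b}"
proof -
  have "{..<a+b} = {..<a} \<union> {a..<a+b}" by auto
  moreover have "sum f ({..<a} \<union> {a..<a+b}) = sum f {..<a} + sum f {a..<a+b}"
    by (rule sum.union_disjoint) auto
  ultimately show ?thesis by simp
qed

lemma payoff_rows: "payoff n m M x y = (\<Sum>i<n. x i * (\<Sum>j<m. M i j * y j))"
  by (simp add: payoff_def sum_distrib_left mult.assoc)

lemma payoff_transp: "payoff n m M x y = payoff m n (\<lambda>j i. M i j) y x"
  unfolding payoff_def by (subst sum.swap) (simp add: mult_ac)

lemma sum_mat_transp: "(\<lambda>j i. sum_mat n1 m1 B1 B2 c i j) = sum_mat m1 n1 (\<lambda>j i. B1 i j) (\<lambda>j i. B2 i j) c"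
  by (auto simp: sum_mat_def fun_eq_iff)

lemma avg_less:
  assumes "finite S" "\<forall>j\<in>S. 0 \<le> w j" "sum w S = 1" "\<forall>j\<in>S. f j < (c::real)"
  shows "(\<Sum>j\<in>S. f j * w j) < c"
proof -
  obtain j where j: "j \<in> S" "w j > 0"
  proof (rule ccontr)
    assume "\<not> thesis"
    with that have "\<forall>j\<in>S. w j = 0" using assms(2) by force
    hence "sum w S = 0" by simp
    with assms(3) show False by simp
  qed
  have "(\<Sum>j\<in>S. f j * w j) < (\<Sum>j\<in>S. c * w j)"
    apply (rule sum_strict_mono_ex1[OF assms(1)])
    using assms(2,4) apply (auto intro!: mult_right_mono)[1]
    using j assms(4) by (intro bexI[of _ j]) simp_all
  also have "\<dots> = c" by (simp add: sum_distrib_left[symmetric] assms(3))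
  finally show ?thesis .
qed

lemma avg_greater:
  assumes "finite S" "\<forall>j\<in>S. 0 \<le> w j" "sum w S = 1" "\<forall>j\<in>S. f j > (c::real)"
  shows "(\<Sum>j\<in>S. f j * w j) > c"
proof -
  have "(\<Sum>j\<in>S. (- f j) * w j) < - c"
    by (rule avg_less) (use assms in auto)
  thus ?thesis by (simp add: sum_negf)
qed

lemma best_resp:
  assumes x: "x \<in> simplex n"
    and opt: "\<forall>x'\<in>simplex n. (\<Sum>i<n. x' i * r i) \<le> (\<Sum>i<n. x i * r i)"
    and i: "i < n" and k: "k < n" and pos: "x i > 0"
  shows "r k \<le> (r i :: real)"
proof (cases "k = i")
  case True thus ?thesis by simp
next
  case False
  define x' where "x' = (\<lambda>l. x l + (if l = k then x i else 0) - (if l = i then x i else 0))"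
  have "x' \<in> simplex n"
    using x i k False pos unfolding simplex_def x'_def
    by (auto simp: sum.distrib sum_subtractf)
  with opt have "(\<Sum>l<n. x' l * r l) \<le> (\<Sum>l<n. x l * r l)" by blast
  moreover have "(\<Sum>l<n. x' l * r l) = (\<Sum>l<n. x l * r l) + x i * r k - x i * r i"
    unfolding x'_def using i k
    by (simp add: algebra_simps sum.distrib sum_subtractf if_distrib[where f="\<lambda>a. _ * a"] cong: if_cong)
  ultimately have "x i * r k \<le> x i * r i" by simp
  thus ?thesis using pos by simp
qed

lemma scale_y: "payoff n m M u (\<lambda>j. v j / b) = payoff n m M u v / b"
  unfolding payoff_def by (simp add: sum_divide_distrib)

lemma scale_x: "payoff n m M (\<lambda>i. u i / a) v = payoff n m M u v / a"
  unfolding payoff_def by (simp add: sum_divide_distrib)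

context
  fixes n1 m1 n2 m2 :: nat and M1 M2 :: "nat \<Rightarrow> nat \<Rightarrow> real" and c :: real
    and x y :: "nat \<Rightarrow> real"
  assumes xs: "x \<in> simplex (n1+n2)" and ys: "y \<in> simplex (m1+m2)"
    and opt: "\<forall>x'\<in>simplex (n1+n2). payoff (n1+n2) (m1+m2) (sum_mat n1 m1 M1 M2 c) x' y
                 \<le> payoff (n1+n2) (m1+m2) (sum_mat n1 m1 M1 M2 c) x y"
begin

definition "rv i = (\<Sum>j<m1+m2. sum_mat n1 m1 M1 M2 c i j * y j)"

lemma opt': "\<forall>x'\<in>simplex (n1+n2). (\<Sum>i<n1+n2. x' i * rv i) \<le> (\<Sum>i<n1+n2. x i * rv i)"
  using opt by (simp add: payoff_rows rv_def)

lemma rv1: "i < n1 \<Longrightarrow> rv i = (\<Sum>j<m1. M1 i j * y j) + c * (\<Sum>j\<in>{m1..<m1+m2}. y j)"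
  unfolding rv_def split_sum
  by (simp add: sum_mat_def sum_distrib_left)

lemma rv2: "n1 \<le> i \<Longrightarrow> rv i = c * (\<Sum>j<m1. y j) + (\<Sum>j\<in>{m1..<m1+m2}. M2 (i-n1) (j-m1) * y j)"
  unfolding rv_def split_sum
  by (simp add: sum_mat_def sum_distrib_left)

lemma y_nonneg: "j < m1 + m2 \<Longrightarrow> 0 \<le> y j" using ys by (simp add: simplex_def)
lemma y_sum: "(\<Sum>j<m1. y j) + (\<Sum>j\<in>{m1..<m1+m2}. y j) = 1"
  using ys by (simp add: simplex_def split_sum)

lemma R1:
  assumes z: "\<forall>j<m1. y j = 0" and lt: "\<forall>i<n2. \<forall>j<m2. M2 i j < c" and n1: "n1 \<ge> 1"
    and i: "i \<in> {n1..<n1+n2}"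
  shows "x i = 0"
proof (rule ccontr)
  assume "x i \<noteq> 0"
  hence pos: "x i > 0" using xs i by (force simp: simplex_def)
  have Y1: "(\<Sum>j<m1. y j) = 0" using z by simp
  hence Y2: "(\<Sum>j\<in>{m1..<m1+m2}. y j) = 1" using y_sum by simp
  have "rv 0 = c" using n1 z by (simp add: rv1 Y2)
  moreover have "rv i < c"
    unfolding rv2[of i, OF conjunct1[OF i[simplified]]] Y1
    apply simp
    apply (rule avg_less)
    using y_nonneg Y2 lt i by auto
  moreover have "rv 0 \<le> rv i"
    by (rule best_resp[OF xs opt']) (use i n1 pos in auto)
  ultimately show False by simp
qed

lemma R2:
  assumes z: "\<forall>j\<in>{m1..<m1+m2}. y j = 0" and gt: "\<forall>i<n1. \<forall>j<m1. M1 i j > c" and n1: "n1 \<ge> 1"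
    and i: "i \<in> {n1..<n1+n2}"
  shows "x i = 0"
proof (rule ccontr)
  assume "x i \<noteq> 0"
  hence pos: "x i > 0" using xs i by (force simp: simplex_def)
  have Y2: "(\<Sum>j\<in>{m1..<m1+m2}. y j) = 0" using z by simp
  hence Y1: "(\<Sum>j<m1. y j) = 1" using y_sum by simp
  have "rv i = c" using i z by (simp add: rv2 Y1)
  moreover have "rv 0 > c"
    using n1 unfolding rv1[of 0, OF order.strict_trans2[OF zero_less_one n1]] Y2
    apply simp
    apply (rule avg_greater)
    using y_nonneg Y1 gt n1 by auto
  moreover have "rv 0 \<le> rv i"
    by (rule best_resp[OF xs opt']) (use i n1 pos in auto)
  ultimately show False by simp
qed

lemma R3:
  assumes z: "\<forall>j<m1. y j = 0" and gt: "\<forall>i<n2. \<forall>j<m2. M2 i j > c" and n2: "n2 \<ge> 1"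
    and i: "i < n1"
  shows "x i = 0"
proof (rule ccontr)
  assume "x i \<noteq> 0"
  moreover have "x i \<ge> 0" using xs i by (simp add: simplex_def)
  ultimately have pos: "x i > 0" by simp
  have Y1: "(\<Sum>j<m1. y j) = 0" using z by simp
  hence Y2: "(\<Sum>j\<in>{m1..<m1+m2}. y j) = 1" using y_sum by simp
  have "rv i = c" using i z by (simp add: rv1 Y2)
  moreover have "rv n1 > c"
    unfolding rv2[of n1, OF order_refl] Y1
    apply simp
    apply (rule avg_greater)
    using y_nonneg Y2 gt n2 by auto
  moreover have "rv n1 \<le> rv i"
    by (rule best_resp[OF xs opt']) (use i n2 pos in auto)
  ultimately show False by simp
qed

lemma R4:
  assumes sx: "(\<Sum>i<n1. x i) > 0" and sy: "(\<Sum>j<m1. y j) > 0" and x': "x' \<in> simplex n1"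
  shows "payoff n1 m1 M1 x' (\<lambda>j. y j / (\<Sum>j<m1. y j))
     \<le> payoff n1 m1 M1 (\<lambda>i. x i / (\<Sum>i<n1. x i)) (\<lambda>j. y j / (\<Sum>j<m1. y j))"
proof -
  define X where "X = (\<Sum>i<n1. x i)"
  define Y2 where "Y2 = (\<Sum>j\<in>{m1..<m1+m2}. y j)"
  define P where "P i = (\<Sum>j<m1. M1 i j * y j)" for i
  define x'' where "x'' l = (if l < n1 then X * x' l else x l)" for l
  have xsum: "(\<Sum>i<n1. x i) + (\<Sum>i\<in>{n1..<n1+n2}. x i) = 1"
    using xs by (simp add: simplex_def split_sum)
  have x'sum: "(\<Sum>i<n1. x' i) = 1" using x' by (simp add: simplex_def)
  have "x'' \<in> simplex (n1+n2)"
    using xs x' sx unfolding simplex_def x''_def split_sum X_def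
    by (auto simp: sum_distrib_left[symmetric])
  hence "(\<Sum>i<n1+n2. x'' i * rv i) \<le> (\<Sum>i<n1+n2. x i * rv i)" using opt' by blast
  moreover have "(\<Sum>i<n1+n2. x'' i * rv i) = X * (\<Sum>i<n1. x' i * P i) + X * c * Y2
     + (\<Sum>i\<in>{n1..<n1+n2}. x i * rv i)"
  proof -
    have "(\<Sum>i<n1. x'' i * rv i) = (\<Sum>i<n1. X * (x' i * P i) + (X * c * Y2) * x' i)"
      by (rule sum.cong) (auto simp: x''_def rv1 P_def Y2_def algebra_simps)
    also have "\<dots> = X * (\<Sum>i<n1. x' i * P i) + X * c * Y2"
      by (simp add: sum.distrib sum_distrib_left[symmetric] x'sum)
    finally show ?thesis unfolding split_sum by (simp add: x''_def)
  qed
  moreover have "(\<Sum>i<n1+n2. x i * rv i) = (\<Sum>i<n1. x i * P i) + X * c * Y2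
     + (\<Sum>i\<in>{n1..<n1+n2}. x i * rv i)"
  proof -
    have "(\<Sum>i<n1. x i * rv i) = (\<Sum>i<n1. x i * P i + (c * Y2) * x i)"
      by (rule sum.cong) (auto simp: rv1 P_def Y2_def algebra_simps)
    also have "\<dots> = (\<Sum>i<n1. x i * P i) + X * c * Y2"
      by (simp add: sum.distrib sum_distrib_left[symmetric] X_def)
    finally show ?thesis unfolding split_sum by simp
  qed
  ultimately have key: "X * payoff n1 m1 M1 x' y \<le> payoff n1 m1 M1 x y"
    by (simp add: payoff_rows P_def)
  have "payoff n1 m1 M1 x' y \<le> payoff n1 m1 M1 x y / X"
    using key sx unfolding X_def[symmetric] by (simp add: field_simps)
  hence "payoff n1 m1 M1 x' y / (\<Sum>j<m1. y j) \<le> payoff n1 m1 M1 x y / X / (\<Sum>j<m1. y j)"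
    using sy by (intro divide_right_mono) auto
  thus ?thesis unfolding scale_x scale_y X_def by (simp add: mult.commute)
qed

end


lemma zero_of_sum:
  assumes "\<forall>i<n+k. 0 \<le> (x::nat\<Rightarrow>real) i" "(\<Sum>i<n. x i) = 0" "i < n"
  shows "x i = 0"
  using assms sum_nonneg_eq_0_iff[of "{..<n}" x] by auto

theorem theorem6:
  fixes n1 m1 n2 m2 :: nat and A1 B1 A2 B2 :: "nat \<Rightarrow> nat \<Rightarrow> real" and K :: real
    and x y :: "nat \<Rightarrow> real"
  assumes "n1 \<ge> 1" "m1 \<ge> 1" "n2 \<ge> 1" "m2 \<ge> 1"
    and "\<forall>i<n1. \<forall>j<m1. \<bar>A1 i j\<bar> < K \<and> \<bar>B1 i j\<bar> < K"
    and "\<forall>i<n2. \<forall>j<m2. \<bar>A2 i j\<bar> < K \<and> \<bar>B2 i j\<bar> < K"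
    and "nash_eq (n1 + n2) (m1 + m2) (sum_mat n1 m1 A1 A2 K) (sum_mat n1 m1 B1 B2 (- K)) x y"
  shows "(\<Sum>l<n1. x l) \<noteq> 0 \<and> (\<Sum>l<m1. y l) \<noteq> 0 \<and>
         nash_eq n1 m1 A1 B1 (\<lambda>i. x i / (\<Sum>l<n1. x l)) (\<lambda>j. y j / (\<Sum>l<m1. y l))"
proof -
  note N = assms(7)[unfolded nash_eq_def]
  have xs: "x \<in> simplex (n1+n2)" and ys: "y \<in> simplex (m1+m2)" using N by auto
  have optA: "\<forall>x'\<in>simplex (n1+n2). payoff (n1+n2) (m1+m2) (sum_mat n1 m1 A1 A2 K) x' y
                 \<le> payoff (n1+n2) (m1+m2) (sum_mat n1 m1 A1 A2 K) x y" using N by auto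
  have tr: "\<And>u. payoff (n1+n2) (m1+m2) (sum_mat n1 m1 B1 B2 (-K)) x u
     = payoff (m1+m2) (n1+n2) (sum_mat m1 n1 (\<lambda>j i. B1 i j) (\<lambda>j i. B2 i j) (-K)) u x"
    by (simp only: payoff_transp[of "n1+n2" "m1+m2" _ x] sum_mat_transp)
  have optB: "\<forall>y'\<in>simplex (m1+m2). payoff (m1+m2) (n1+n2) (sum_mat m1 n1 (\<lambda>j i. B1 i j) (\<lambda>j i. B2 i j) (-K)) y' x
                 \<le> payoff (m1+m2) (n1+n2) (sum_mat m1 n1 (\<lambda>j i. B1 i j) (\<lambda>j i. B2 i j) (-K)) y x"
    using N by (simp add: tr[symmetric])
  have A2lt: "\<forall>i<n2. \<forall>j<m2. A2 i j < K" using assms(6) by fastforce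
  have B1gt: "\<forall>i<m1. \<forall>j<n1. (\<lambda>j i. B1 i j) i j > -K" using assms(5) by fastforce
  have B2gt: "\<forall>i<m2. \<forall>j<n2. (\<lambda>j i. B2 i j) i j > -K" using assms(6) by fastforce
  have xnn: "\<forall>i<n1+n2. 0 \<le> x i" and xsum: "(\<Sum>i<n1+n2. x i) = 1" using xs by (auto simp: simplex_def)
  have ynn: "\<forall>i<m1+m2. 0 \<le> y i" and ysum: "(\<Sum>i<m1+m2. y i) = 1" using ys by (auto simp: simplex_def)
  have sxnn: "(\<Sum>i<n1. x i) \<ge> 0" using xnn by (auto intro: sum_nonneg)
  have synn: "(\<Sum>i<m1. y i) \<ge> 0" using ynn by (auto intro: sum_nonneg)
  have sx: "(\<Sum>i<n1. x i) > 0"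
  proof (rule ccontr)
    assume "\<not> ?thesis"
    hence "(\<Sum>i<n1. x i) = 0" using sxnn by simp
    hence x1: "\<forall>i<n1. x i = 0" using zero_of_sum[OF xnn] by blast
    have y1: "\<forall>j<m1. y j = 0"
      using R3[OF ys xs optB x1 B2gt assms(4)] by blast
    have x2: "\<forall>i\<in>{n1..<n1+n2}. x i = 0"
      using R1[OF xs ys optA y1 A2lt assms(1)] by blast
    have "(\<Sum>i<n1+n2. x i) = 0" unfolding split_sum using x1 x2 by simp
    with xsum show False by simp
  qed
  have sy: "(\<Sum>i<m1. y i) > 0"
  proof (rule ccontr)
    assume "\<not> ?thesis"
    hence "(\<Sum>i<m1. y i) = 0" using synn by simp
    hence y1: "\<forall>i<m1. y i = 0" using zero_of_sum[OF ynn] by blast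
    have x2: "\<forall>i\<in>{n1..<n1+n2}. x i = 0"
      using R1[OF xs ys optA y1 A2lt assms(1)] by blast
    have y2: "\<forall>j\<in>{m1..<m1+m2}. y j = 0"
      using R2[OF ys xs optB x2 B1gt assms(2)] by blast
    have "(\<Sum>i<m1+m2. y i) = 0" unfolding split_sum using y1 y2 by simp
    with ysum show False by simp
  qed
  have xh: "(\<lambda>i. x i / (\<Sum>l<n1. x l)) \<in> simplex n1"
    using xnn sx unfolding simplex_def by (auto simp: sum_divide_distrib[symmetric])
  have yh: "(\<lambda>j. y j / (\<Sum>l<m1. y l)) \<in> simplex m1"
    using ynn sy unfolding simplex_def by (auto simp: sum_divide_distrib[symmetric])
  have rowopt: "\<forall>x'\<in>simplex n1. payoff n1 m1 A1 x' (\<lambda>j. y j / (\<Sum>l<m1. y l))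
     \<le> payoff n1 m1 A1 (\<lambda>i. x i / (\<Sum>l<n1. x l)) (\<lambda>j. y j / (\<Sum>l<m1. y l))"
    using R4[OF xs ys optA sx sy] by blast
  have colopt: "\<forall>y'\<in>simplex m1. payoff n1 m1 B1 (\<lambda>i. x i / (\<Sum>l<n1. x l)) y'
     \<le> payoff n1 m1 B1 (\<lambda>i. x i / (\<Sum>l<n1. x l)) (\<lambda>j. y j / (\<Sum>l<m1. y l))"
  proof
    fix y' assume "y' \<in> simplex m1"
    from R4[OF ys xs optB sy sx this] show "payoff n1 m1 B1 (\<lambda>i. x i / (\<Sum>l<n1. x l)) y'
     \<le> payoff n1 m1 B1 (\<lambda>i. x i / (\<Sum>l<n1. x l)) (\<lambda>j. y j / (\<Sum>l<m1. y l))"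
      by (simp only: payoff_transp[of n1 m1 B1])
  qed
  show ?thesis using sx sy xh yh rowopt colopt unfolding nash_eq_def by simp
qed

end
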